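(* Assume $g(k)\sim k^\alpha$ for some $\alpha\in(0,1]$. For $\varphi>0$ let $X$ have distribution $\mathcal P_\varphi$. Then for each $n\in\mathbb N$, $E[X^n]\sim\varphi^{n/\alpha}$ as $\varphi\to\infty$. Consequently $\ln Z(\varphi)\sim\alpha\varphi^{1/\alpha}$ and $\mathrm{Var}[X]=o(\varphi^{2/\alpha})$ as $\varphi\to\infty$.
   Context: $g:\mathbb N_0\to[0,\infty)$ with $g(n)=0$ iff $n=0$ (also Lipschitz and nondecreasing), $\lim_{k\to\infty}g(k)/k^\alpha=1$. $g(0)!=1$, $g(n)!=\prod_{i=1}^ng(i)$, $Z(\phi)=\sum_{n\ge0}\phi^n/g(n)!$, $\mathcal P_\phi(n)=\phi^n/(g(n)!Z(\phi))$. $a(\varphi)\sim b(\varphi)$ means $a/b\to1$. *)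

theory Defs
  imports "HOL-Analysis.Analysis" "HOL-Library.Landau_Symbols"
begin

definition admissible_g :: "(nat \<Rightarrow> real) \<Rightarrow> bool" where
  "admissible_g g \<longleftrightarrow>
     (\<forall>n. g n \<ge> 0) \<and> (\<forall>n. g n = 0 \<longleftrightarrow> n = 0) \<and>
     (\<exists>L. \<forall>m n. \<bar>g m - g n\<bar> \<le> L * \<bar>real m - real n\<bar>) \<and> mono g"

definition gfact :: "(nat \<Rightarrow> real) \<Rightarrow> nat \<Rightarrow> real" where
  "gfact g n = (\<Prod>i=1..n. g i)"

definition Zg :: "(nat \<Rightarrow> real) \<Rightarrow> real \<Rightarrow> real" where
  "Zg g \<phi> = (\<Sum>n. \<phi> ^ n / gfact g n)"

definition Pg :: "(nat \<Rightarrow> real) \<Rightarrow> real \<Rightarrow> nat \<Rightarrow> real" where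
  "Pg g \<phi> n = \<phi> ^ n / (gfact g n * Zg g \<phi>)"

definition moment :: "(nat \<Rightarrow> real) \<Rightarrow> real \<Rightarrow> nat \<Rightarrow> real" where
  "moment g \<phi> n = (\<Sum>k. real k ^ n * Pg g \<phi> k)"

definition variance_g :: "(nat \<Rightarrow> real) \<Rightarrow> real \<Rightarrow> real" where
  "variance_g g \<phi> = moment g \<phi> 2 - (moment g \<phi> 1)\<^sup>2"

end

theory Submission
  imports Defs "HOL-Real_Asymp.Real_Asymp"
begin


definition aa :: "(nat \<Rightarrow> real) \<Rightarrow> real \<Rightarrow> nat \<Rightarrow> real" where
  "aa g \<phi> k = \<phi> ^ k / gfact g k"

lemma adm_pos: "admissible_g g \<Longrightarrow> 0 < k \<Longrightarrow> g k > 0"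
  unfolding admissible_g_def by (metis less_eq_real_def not_gr0)

lemma adm_mono: "admissible_g g \<Longrightarrow> m \<le> n \<Longrightarrow> g m \<le> g n"
  unfolding admissible_g_def by (simp add: monoD)

lemma gfact_pos: "admissible_g g \<Longrightarrow> gfact g k > 0"
  unfolding gfact_def by (rule prod_pos) (auto intro: adm_pos)

lemma gfact_Suc: "gfact g (Suc k) = gfact g k * g (Suc k)"
  unfolding gfact_def by (simp add: prod.nat_ivl_Suc' mult.commute)

lemma gfact_0: "gfact g 0 = 1"
  unfolding gfact_def by simp

lemma aa_Suc: "admissible_g g \<Longrightarrow> aa g \<phi> (Suc k) = aa g \<phi> k * \<phi> / g (Suc k)"
  unfolding aa_def gfact_Suc by simp

lemma aa_nonneg: "admissible_g g \<Longrightarrow> \<phi> \<ge> 0 \<Longrightarrow> aa g \<phi> k \<ge> 0"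
  unfolding aa_def using gfact_pos[of g k] by simp

lemma aa_0: "aa g \<phi> 0 = 1"
  unfolding aa_def gfact_0 by simp

lemma g_at_top:
  assumes "\<alpha> > 0" "((\<lambda>k. g k / real k powr \<alpha>) \<longlongrightarrow> 1) at_top"
  shows "filterlim g at_top sequentially"
proof -
  have h: "filterlim (\<lambda>k. real k powr \<alpha>) at_top sequentially"
    using assms(1) by real_asymp
  have 1: "filterlim (\<lambda>k. g k / real k powr \<alpha> * real k powr \<alpha>) at_top sequentially"
    by (rule filterlim_tendsto_pos_mult_at_top[OF assms(2) zero_less_one h])
  have ev: "eventually (\<lambda>k. g k / real k powr \<alpha> * real k powr \<alpha> = g k) sequentially"
    using eventually_gt_at_top[of 0] by eventually_elim simp
  show ?thesis by (rule filterlim_cong[THEN iffD1, OF refl refl ev 1])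
qed


definition S :: "(nat \<Rightarrow> real) \<Rightarrow> real \<Rightarrow> nat \<Rightarrow> real" where
  "S g \<phi> n = (\<Sum>k. real k ^ n * aa g \<phi> k)"

lemma summable_b:
  assumes adm: "admissible_g g" and gt: "filterlim g at_top sequentially" and phi: "\<phi> > 0"
  shows "summable (\<lambda>k. real k ^ n * aa g \<phi> k)"
proof -
  from gt have "eventually (\<lambda>k. g k \<ge> 2^(n+1)*\<phi>) sequentially"
    by (simp add: filterlim_at_top)
  then obtain N where N: "\<And>k. k \<ge> N \<Longrightarrow> g k \<ge> 2^(n+1)*\<phi>"
    by (auto simp: eventually_at_top_linorder)
  show ?thesis
  proof (rule summable_ratio_test[of "1/2" "Suc N"])
    fix k assume k: "k \<ge> Suc N"
    have gk: "g (Suc k) \<ge> 2^(n+1)*\<phi>" using N k by simp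
    have gpos: "g (Suc k) > 0" using adm_pos[OF adm] by simp
    have "real (Suc k) \<le> 2 * real k" using k by simp
    then have "real (Suc k) ^ n \<le> (2 * real k) ^ n" by (rule power_mono) simp
    then have pk: "real (Suc k) ^ n \<le> 2^n * real k ^ n" by (simp add: power_mult_distrib)
    have q: "\<phi> / g (Suc k) \<le> 1 / 2^(n+1)"
      using gk gpos phi by (simp add: field_simps)
    have a0: "aa g \<phi> k \<ge> 0" using aa_nonneg[OF adm] phi by simp
    have "real (Suc k) ^ n * aa g \<phi> (Suc k) = real (Suc k) ^ n * aa g \<phi> k * (\<phi> / g (Suc k))"
      using aa_Suc[OF adm] by simp
    also have "\<dots> \<le> (2^n * real k ^ n) * aa g \<phi> k * (1 / 2^(n+1))"
      apply (rule mult_mono)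
      apply (rule mult_right_mono[OF pk a0])
      using q phi gpos a0 by auto
    also have "\<dots> = 1/2 * (real k ^ n * aa g \<phi> k)" by simp
    finally show "norm (real (Suc k) ^ n * aa g \<phi> (Suc k)) \<le> 1/2 * norm (real k ^ n * aa g \<phi> k)"
      using a0 aa_nonneg[OF adm, of \<phi> "Suc k"] phi by simp
  qed simp
qed

lemma summable_aa:
  assumes adm: "admissible_g g" and gt: "filterlim g at_top sequentially" and phi: "\<phi> > 0"
  shows "summable (aa g \<phi>)"
  using summable_b[OF assms, of 0] by simp

lemma S0_eq: "S g \<phi> 0 = suminf (aa g \<phi>)"
  unfolding S_def by simp

lemma Zg_eq: "Zg g \<phi> = S g \<phi> 0"
  unfolding S0_eq Zg_def aa_def by simp

lemma aa_le_S0: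
  assumes adm: "admissible_g g" and gt: "filterlim g at_top sequentially" and phi: "\<phi> > 0"
  shows "aa g \<phi> k \<le> S g \<phi> 0"
proof -
  have "sum (aa g \<phi>) {k} \<le> suminf (aa g \<phi>)"
    by (rule sum_le_suminf[OF summable_aa[OF assms]]) (use aa_nonneg[OF adm] phi in auto)
  then show ?thesis by (simp add: S0_eq)
qed

lemma S0_ge1:
  assumes adm: "admissible_g g" and gt: "filterlim g at_top sequentially" and phi: "\<phi> > 0"
  shows "S g \<phi> 0 \<ge> 1"
  using aa_le_S0[OF assms, of 0] by (simp add: aa_0)

lemma moment_eq:
  assumes adm: "admissible_g g" and gt: "filterlim g at_top sequentially" and phi: "\<phi> > 0"
  shows "moment g \<phi> n = S g \<phi> n / S g \<phi> 0"
proof -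
  have "(\<lambda>k. real k ^ n * Pg g \<phi> k) = (\<lambda>k. (real k ^ n * aa g \<phi> k) / S g \<phi> 0)"
    by (simp add: Pg_def aa_def fun_eq_iff Zg_eq)
  then show ?thesis
    unfolding moment_def using suminf_divide[OF summable_b[OF assms, of n]]
    by (simp add: S_def)
qed

lemma geo_up:
  assumes "\<forall>k\<ge>N. b (Suc k) \<le> r * (b k :: real)" "0 \<le> r"
  shows "b (N + j) \<le> r^j * b N"
proof (induction j)
  case 0 then show ?case by simp
next
  case (Suc j)
  have "b (N + Suc j) \<le> r * b (N + j)" using assms(1) by simp
  also have "\<dots> \<le> r * (r^j * b N)" using Suc assms(2) by (rule mult_left_mono)
  finally show ?case by simp
qed

lemma geo_down:
  assumes "\<forall>k<N. a k \<le> r * (a (Suc k) :: real)" "0 \<le> r"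
  shows "j \<le> N \<Longrightarrow> a (N - j) \<le> r^j * a N"
proof (induction j)
  case 0 then show ?case by simp
next
  case (Suc j)
  have e: "Suc (N - Suc j) = N - j" using Suc.prems by simp
  have "a (N - Suc j) \<le> r * a (Suc (N - Suc j))" using assms(1) Suc.prems by simp
  also have "\<dots> = r * a (N - j)" by (simp add: e)
  also have "\<dots> \<le> r * (r^j * a N)" using Suc assms(2) by (intro mult_left_mono) auto
  finally show ?case by simp
qed

lemma tail_bound:
  fixes b :: "nat \<Rightarrow> real"
  assumes sb: "summable b" and bn: "\<And>k. b k \<ge> 0" and st: "\<forall>k\<ge>N. b (Suc k) \<le> r * b k"
    and r: "0 \<le> r" "r < 1"
  shows "(\<Sum>j. b (j + N)) \<le> b N / (1 - r)"
proof -
  have "(\<Sum>j. b (j + N)) \<le> (\<Sum>j. r^j * b N)"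
  proof (rule suminf_le)
    show "\<And>j. b (j + N) \<le> r^j * b N" using geo_up[OF st r(1)] by (simp add: add.commute)
    show "summable (\<lambda>j. b (j + N))" using sb by (rule summable_ignore_initial_segment)
    show "summable (\<lambda>j. r^j * b N)" using r by (intro summable_mult2 summable_geometric) simp
  qed
  also have "\<dots> = b N / (1 - r)"
    using suminf_mult2[OF summable_geometric[of r]] suminf_geometric[of r] r by simp
  finally show ?thesis .
qed


lemma upper_fixed:
  assumes adm: "admissible_g g" and gt: "filterlim g at_top sequentially" and phi: "\<phi> > 0"
    and K: "1 \<le> K0" "K0 \<le> K1" and r: "0 \<le> r" "r < 1"
    and st: "\<forall>k\<ge>K0. real (Suc k)^n * aa g \<phi> (Suc k) \<le> r * (real k^n * aa g \<phi> k)"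
  shows "S g \<phi> n \<le> real K1^n * S g \<phi> 0 + r^(K1-K0) * real K0^n * S g \<phi> 0 / (1-r)"
proof -
  define b where "b = (\<lambda>k. real k ^n * aa g \<phi> k)"
  have sb: "summable b" unfolding b_def by (rule summable_b[OF adm gt phi])
  have bn: "\<And>k. b k \<ge> 0" unfolding b_def using aa_nonneg[OF adm] phi by simp
  have st': "\<forall>k\<ge>K0. b (Suc k) \<le> r * b k" using st unfolding b_def by simp
  have split: "S g \<phi> n = (\<Sum>j. b (j + K1)) + sum b {..<K1}"
    unfolding S_def b_def[symmetric] by (rule suminf_split_initial_segment[OF sb])
  have t: "(\<Sum>j. b (j + K1)) \<le> b K1 / (1 - r)"
    by (rule tail_bound[OF sb bn _ r]) (use st' K in auto)
  have bK1: "b K1 \<le> r^(K1-K0) * b K0"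
    using geo_up[OF st' r(1), of "K1-K0"] K by simp
  have bK0: "b K0 \<le> real K0^n * S g \<phi> 0"
    unfolding b_def by (rule mult_left_mono[OF aa_le_S0[OF adm gt phi]]) simp
  have "sum b {..<K1} \<le> sum (\<lambda>k. real K1^n * aa g \<phi> k) {..<K1}"
    unfolding b_def
    by (rule sum_mono, rule mult_right_mono) (use aa_nonneg[OF adm] phi in \<open>auto intro: power_mono\<close>)
  also have "\<dots> = real K1^n * sum (aa g \<phi>) {..<K1}" by (simp add: sum_distrib_left)
  also have "\<dots> \<le> real K1^n * S g \<phi> 0"
    unfolding S0_eq
    by (rule mult_left_mono, rule sum_le_suminf[OF summable_aa[OF adm gt phi]])
      (use aa_nonneg[OF adm] phi in auto)
  finally have fin: "sum b {..<K1} \<le> real K1^n * S g \<phi> 0" .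
  have "b K1 \<le> r^(K1-K0) * (real K0^n * S g \<phi> 0)"
    using bK1 mult_left_mono[OF bK0, of "r^(K1-K0)"] r by simp
  then have "b K1 / (1 - r) \<le> r^(K1-K0) * real K0^n * S g \<phi> 0 / (1-r)"
    using r by (simp add: divide_right_mono mult.assoc)
  then show ?thesis using split t fin by linarith
qed

lemma lower_fixed:
  assumes adm: "admissible_g g" and gt: "filterlim g at_top sequentially" and phi: "\<phi> > 0"
    and M: "M \<le> M3" and rho: "0 \<le> \<rho>" "\<rho> \<le> 1" and cc: "0 \<le> cc"
    and st: "\<forall>k<M3. aa g \<phi> k \<le> \<rho> * aa g \<phi> (Suc k)"
    and kM: "\<forall>k\<ge>M. cc \<le> real k"
  shows "S g \<phi> n \<ge> cc^n * (S g \<phi> 0 - real M * \<rho>^(M3-M) * S g \<phi> 0)"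
proof -
  define b where "b = (\<lambda>k. real k ^n * aa g \<phi> k)"
  have sb: "summable b" unfolding b_def by (rule summable_b[OF adm gt phi])
  have sa: "summable (aa g \<phi>)" by (rule summable_aa[OF adm gt phi])
  have an: "\<And>k. aa g \<phi> k \<ge> 0" using aa_nonneg[OF adm] phi by simp
  have bn: "\<And>k. b k \<ge> 0" unfolding b_def using an by simp
  have split: "S g \<phi> n = (\<Sum>j. b (j + M)) + sum b {..<M}"
    unfolding S_def b_def[symmetric] by (rule suminf_split_initial_segment[OF sb])
  have splita: "S g \<phi> 0 = (\<Sum>j. aa g \<phi> (j + M)) + sum (aa g \<phi>) {..<M}"
    unfolding S0_eq by (rule suminf_split_initial_segment[OF sa])
  have "(\<Sum>j. cc^n * aa g \<phi> (j + M)) \<le> (\<Sum>j. b (j + M))"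
  proof (rule suminf_le)
    show "summable (\<lambda>j. b (j + M))" using sb by (rule summable_ignore_initial_segment)
    show "summable (\<lambda>j. cc^n * aa g \<phi> (j + M))"
      using sa by (intro summable_mult summable_ignore_initial_segment)
    fix j show "cc^n * aa g \<phi> (j + M) \<le> b (j + M)"
      unfolding b_def using kM cc an by (intro mult_right_mono power_mono) auto
  qed
  moreover have "(\<Sum>j. cc^n * aa g \<phi> (j + M)) = cc^n * (\<Sum>j. aa g \<phi> (j + M))"
    by (rule suminf_mult[OF summable_ignore_initial_segment[OF sa]])
  moreover have "sum b {..<M} \<ge> 0" using bn by (simp add: sum_nonneg)
  ultimately have A: "S g \<phi> n \<ge> cc^n * (S g \<phi> 0 - sum (aa g \<phi>) {..<M})"
    using split splita by simp
  have "sum (aa g \<phi>) {..<M} \<le> of_nat (card {..<M}) * (\<rho>^(M3-M) * S g \<phi> 0)"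
  proof (rule sum_bounded_above)
    fix k assume "k \<in> {..<M}"
    then have k: "k < M" by simp
    have "aa g \<phi> (M3 - (M3 - k)) \<le> \<rho>^(M3-k) * aa g \<phi> M3"
      by (rule geo_down[OF st rho(1)]) simp
    then have "aa g \<phi> k \<le> \<rho>^(M3-k) * aa g \<phi> M3" using k M by simp
    also have "\<dots> \<le> \<rho>^(M3-M) * S g \<phi> 0"
      apply (rule mult_mono)
      using rho k M aa_le_S0[OF adm gt phi] an by (auto intro: power_decreasing)
    finally show "aa g \<phi> k \<le> \<rho>^(M3-M) * S g \<phi> 0" .
  qed
  then have "sum (aa g \<phi>) {..<M} \<le> real M * \<rho>^(M3-M) * S g \<phi> 0" by simp
  then have "cc^n * (S g \<phi> 0 - sum (aa g \<phi>) {..<M}) \<ge> cc^n * (S g \<phi> 0 - real M * \<rho>^(M3-M) * S g \<phi> 0)"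
    using cc by (intro mult_left_mono) auto
  then show ?thesis using A by linarith
qed



definition cpow :: "real \<Rightarrow> real \<Rightarrow> real" where
  "cpow \<alpha> \<phi> = \<phi> powr (1/\<alpha>)"

lemma cpow_pos: "\<phi> > 0 \<Longrightarrow> cpow \<alpha> \<phi> > 0"
  unfolding cpow_def by simp

lemma cpow_powr: "\<phi> > 0 \<Longrightarrow> \<alpha> > 0 \<Longrightarrow> cpow \<alpha> \<phi> powr \<alpha> = \<phi>"
  unfolding cpow_def by (simp add: powr_powr)

lemma cpow_at_top: "\<alpha> > 0 \<Longrightarrow> filterlim (cpow \<alpha>) at_top at_top"
  unfolding cpow_def by real_asymp

lemma ev_cpow: "\<alpha> > 0 \<Longrightarrow> eventually P at_top \<Longrightarrow> eventually (\<lambda>\<phi>. P (cpow \<alpha> \<phi>)) at_top"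
  by (rule eventually_compose_filterlim[OF _ cpow_at_top])

lemma alg1:
  fixes A B C Z p r :: real
  assumes "C > 0" "Z > 0" "r < 1"
  shows "(A*Z + p*B*Z/(1-r))/(C*Z) = A/C + p*(B/C)/(1-r)"
proof -
  have "1 - r \<noteq> 0" using assms by simp
  then show ?thesis using assms by (simp add: field_simps)
qed

lemma alg2:
  fixes a c Z m :: real
  assumes "c^n > 0" "Z > 0"
  shows "(a*c)^n*(Z - m*Z)/(c^n*Z) = a^n*(1-m)"
proof -
  have "(a*c)^n*(Z - m*Z) = (a^n*(1-m)) * (c^n*Z)" by (simp add: power_mult_distrib algebra_simps)
  moreover have "c^n*Z \<noteq> 0" using assms by (metis less_irrefl mult_pos_pos)
  ultimately show ?thesis by (metis nonzero_mult_div_cancel_right)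
qed

lemma lim_rho2:
  fixes \<rho> e :: real
  assumes "0 < \<rho>" "\<rho> < 1" "0 < e"
  shows "((\<lambda>x. (x+1) * \<rho> powr (e * x / 2 - 2)) \<longlongrightarrow> 0) at_top"
proof -
  define m where "m = - ln \<rho>"
  have m: "m > 0" unfolding m_def using ln_less_zero[of \<rho>] assms by simp
  have eq: "\<And>y. \<rho> powr y = exp (- (m * y))" unfolding m_def using assms by (simp add: powr_def)
  have "((\<lambda>x::real. (x+1) * exp (- (m * (e*x/2 - 2)))) \<longlongrightarrow> 0) at_top"
    using m assms(3) by real_asymp
  then show ?thesis unfolding eq .
qed

lemma lim_rho1:
  fixes \<rho> e :: real
  assumes "0 < \<rho>" "\<rho> < 1" "0 < e"
  shows "((\<lambda>x. \<rho> powr (e * x / 2 - 1)) \<longlongrightarrow> 0) at_top"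
proof -
  define m where "m = - ln \<rho>"
  have m: "m > 0" unfolding m_def using ln_less_zero[of \<rho>] assms by simp
  have eq: "\<And>y. \<rho> powr y = exp (- (m * y))" unfolding m_def using assms by (simp add: powr_def)
  have "((\<lambda>x::real. exp (- (m * (e*x/2 - 1)))) \<longlongrightarrow> 0) at_top"
    using m assms(3) by real_asymp
  then show ?thesis unfolding eq .
qed

context
  fixes g :: "nat \<Rightarrow> real" and \<alpha> :: real
  assumes adm: "admissible_g g" and a0: "0 < \<alpha>" and a1: "\<alpha> \<le> 1"
    and lim: "((\<lambda>k. g k / real k powr \<alpha>) \<longlongrightarrow> 1) at_top"
begin

lemma gt: "filterlim g at_top sequentially"
  by (rule g_at_top[OF a0 lim])

lemma upper_ev:
  assumes e: "0 < \<epsilon>" "\<epsilon> < 1"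
  shows "\<exists>r'. 0 < r' \<and> r' < 1 \<and> eventually (\<lambda>\<phi>. S g \<phi> n / (cpow \<alpha> \<phi> ^ n * S g \<phi> 0)
           \<le> (1 + \<epsilon> + 1 / cpow \<alpha> \<phi>)^n * (1 + r' powr (\<epsilon> * cpow \<alpha> \<phi> / 2 - 1) / (1 - r'))) at_top"
proof -
  define q where "q = (1 + \<epsilon>/2) powr \<alpha>"
  have q1: "q > 1" unfolding q_def using e a0 by (intro gr_one_powr) auto
  define t where "t = (q+1)/(2*q)"
  have t1: "t < 1" using q1 unfolding t_def by (simp add: field_simps)
  have "eventually (\<lambda>k. g k / real k powr \<alpha> > t) sequentially"
    using order_tendstoD(1)[OF lim t1] by simp
  then obtain N1 where N1: "\<And>k. k \<ge> N1 \<Longrightarrow> g k / real k powr \<alpha> > t"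
    by (auto simp: eventually_at_top_linorder)
  define r where "r = 2/(q+1)"
  define r' where "r' = (1+r)/2"
  have r: "0 < r" "r < 1" using q1 unfolding r_def by (auto simp: field_simps)
  have r': "0 < r'" "r' < 1" "r < r'" using r unfolding r'_def by auto
  have "((\<lambda>x::real. 1 + 1/x) \<longlongrightarrow> 1) at_top" by real_asymp
  then have "((\<lambda>x::real. (1 + 1/x)^n) \<longlongrightarrow> 1^n) at_top" by (rule tendsto_power)
  then have "eventually (\<lambda>x::real. (1 + 1/x)^n < r'/r) at_top"
    using r r' by (intro order_tendstoD(2)) (auto simp: field_simps)
  then have E3: "eventually (\<lambda>\<phi>. (1 + 1/cpow \<alpha> \<phi>)^n < r'/r) at_top"
    by (rule ev_cpow[OF a0])
  have E2: "eventually (\<lambda>\<phi>. cpow \<alpha> \<phi> \<ge> real N1 + 1) at_top"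
    by (rule ev_cpow[OF a0]) (rule eventually_ge_at_top)
  have E1: "eventually (\<lambda>\<phi>::real. \<phi> > 0) at_top" by (rule eventually_gt_at_top)
  have "eventually (\<lambda>\<phi>. S g \<phi> n / (cpow \<alpha> \<phi> ^ n * S g \<phi> 0)
           \<le> (1 + \<epsilon> + 1 / cpow \<alpha> \<phi>)^n * (1 + r' powr (\<epsilon> * cpow \<alpha> \<phi> / 2 - 1) / (1 - r'))) at_top"
    using E1 E2 E3
  proof eventually_elim
    case (elim \<phi>)
    define c where "c = cpow \<alpha> \<phi>"
    have phi: "\<phi> > 0" using elim by simp
    have c: "c \<ge> real N1 + 1" "c > 0" using elim cpow_pos[OF phi] unfolding c_def by auto
    have cpa: "c powr \<alpha> = \<phi>" unfolding c_def by (rule cpow_powr[OF phi a0])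
    have E3': "(1 + 1/c)^n \<le> r'/r" using elim unfolding c_def by simp
    define K0 where "K0 = nat \<lceil>(1+\<epsilon>/2)*c\<rceil>"
    define K1 where "K1 = nat \<lceil>(1+\<epsilon>)*c\<rceil>"
    have x0: "(1+\<epsilon>/2)*c \<ge> 0" "(1+\<epsilon>)*c \<ge> 0" using c e by simp_all
    have eK0: "real K0 = real_of_int \<lceil>(1+\<epsilon>/2)*c\<rceil>"
      unfolding K0_def using x0 by (simp add: of_nat_nat)
    have eK1: "real K1 = real_of_int \<lceil>(1+\<epsilon>)*c\<rceil>"
      unfolding K1_def using x0 by (simp add: of_nat_nat)
    have rK0: "(1+\<epsilon>/2)*c \<le> real K0" "real K0 \<le> (1+\<epsilon>/2)*c + 1"
      unfolding eK0 by (rule le_of_int_ceiling, rule of_int_ceiling_le_add_one)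
    have rK1: "(1+\<epsilon>)*c \<le> real K1" "real K1 \<le> (1+\<epsilon>)*c + 1"
      unfolding eK1 by (rule le_of_int_ceiling, rule of_int_ceiling_le_add_one)
    have K01: "K0 \<le> K1" unfolding K0_def K1_def using c e
      by (intro nat_mono ceiling_mono mult_right_mono) auto
    have "c \<le> (1+\<epsilon>/2)*c" using c e by (simp add: algebra_simps)
    then have cK0: "c \<le> real K0" using rK0 by linarith
    have K0N: "K0 \<ge> N1" using cK0 c by linarith
    have K0pos: "K0 \<ge> 1" using cK0 c by linarith
    have gK0: "g K0 > t * real K0 powr \<alpha>"
      using N1[OF K0N] K0pos by (simp add: field_simps)
    have "real K0 powr \<alpha> \<ge> ((1+\<epsilon>/2)*c) powr \<alpha>"
      using rK0 c e a0 by (intro powr_mono2) auto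
    also have "((1+\<epsilon>/2)*c) powr \<alpha> = q * \<phi>"
      unfolding q_def powr_mult cpa ..
    finally have Kq: "q * \<phi> \<le> real K0 powr \<alpha>" .
    have tpos: "t > 0" unfolding t_def using q1 by simp
    have "t * (q * \<phi>) \<le> t * real K0 powr \<alpha>" using Kq tpos by (intro mult_left_mono) auto
    then have "g K0 > t * (q * \<phi>)" using gK0 by linarith
    moreover have "t * (q * \<phi>) = (q+1)/2 * \<phi>" unfolding t_def using q1 by (simp add: field_simps)
    ultimately have gK0': "g K0 > (q+1)/2 * \<phi>" by linarith
    have st: "\<forall>k\<ge>K0. real (Suc k)^n * aa g \<phi> (Suc k) \<le> r' * (real k^n * aa g \<phi> k)"
    proof (intro allI impI)
      fix k assume k: "K0 \<le> k"
      have kc: "real k \<ge> c" using cK0 k by linarith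
      have gS: "g (Suc k) \<ge> g K0" using adm_mono[OF adm, of K0 "Suc k"] k by simp
      have gpos: "g (Suc k) > 0" using adm_pos[OF adm] by simp
      have ratio: "\<phi> / g (Suc k) \<le> r"
      proof -
        have "\<phi> / g (Suc k) \<le> \<phi> / ((q+1)/2 * \<phi>)"
          using gS gK0' phi q1 gpos by (intro divide_left_mono) auto
        also have "\<dots> = r"
        proof -
          have "\<phi> + \<phi>*q \<noteq> 0" using phi q1 by (smt (verit) mult_pos_pos)
          then show ?thesis unfolding r_def using phi q1 by (simp add: field_simps)
        qed
        finally show ?thesis .
      qed
      have "real (Suc k) \<le> (1 + 1/c) * real k"
        using kc c by (simp add: field_simps)
      then have "real (Suc k)^n \<le> ((1 + 1/c) * real k)^n" by (rule power_mono) simp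
      then have pk: "real (Suc k)^n \<le> (1 + 1/c)^n * real k^n" by (simp add: power_mult_distrib)
      have a0': "aa g \<phi> k \<ge> 0" using aa_nonneg[OF adm] phi by simp
      have "real (Suc k)^n * aa g \<phi> (Suc k) = real (Suc k)^n * aa g \<phi> k * (\<phi> / g (Suc k))"
        using aa_Suc[OF adm] by simp
      also have "\<dots> \<le> ((1 + 1/c)^n * real k^n) * aa g \<phi> k * r"
        apply (rule mult_mono)
        apply (rule mult_right_mono[OF pk a0'])
        using ratio phi gpos a0' r c by auto
      also have "\<dots> = ((1 + 1/c)^n * r) * (real k^n * aa g \<phi> k)" by simp
      also have "\<dots> \<le> (r'/r * r) * (real k^n * aa g \<phi> k)"
        using E3' r a0' by (intro mult_right_mono) auto
      also have "\<dots> = r' * (real k^n * aa g \<phi> k)" using r by simp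
      finally show "real (Suc k)^n * aa g \<phi> (Suc k) \<le> r' * (real k^n * aa g \<phi> k)" .
    qed
    have S0p: "S g \<phi> 0 > 0" using S0_ge1[OF adm gt phi] by simp
    have U: "S g \<phi> n \<le> real K1^n * S g \<phi> 0 + r'^(K1-K0) * real K0^n * S g \<phi> 0 / (1-r')"
      by (rule upper_fixed[OF adm gt phi K0pos K01 _ r'(2) st]) (use r' in simp)
    define X where "X = 1 + \<epsilon> + 1/c"
    have X0: "X \<ge> 0" unfolding X_def using e c by simp
    have K1c: "real K1 / c \<le> X" using rK1 c unfolding X_def by (simp add: field_simps)
    have ec: "\<epsilon> * c > 0" using e c by simp
    have "(1+\<epsilon>/2)*c + 1 \<le> (1+\<epsilon>)*c + 1" using ec by (simp add: algebra_simps)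
    then have K0c': "real K0 \<le> (1+\<epsilon>)*c + 1" using rK0 by linarith
    have K0c: "real K0 / c \<le> X" using K0c' c unfolding X_def by (simp add: field_simps)
    have cn: "c^n > 0" using c by simp
    have "S g \<phi> n / (c^n * S g \<phi> 0) \<le> (real K1^n * S g \<phi> 0 + r'^(K1-K0) * real K0^n * S g \<phi> 0 / (1-r')) / (c^n * S g \<phi> 0)"
      using U cn S0p by (intro divide_right_mono) auto
    also have "\<dots> = (real K1 / c)^n + r'^(K1-K0) * (real K0 / c)^n / (1-r')"
      unfolding power_divide using alg1[OF cn S0p r'(2)] by simp
    also have "\<dots> \<le> X^n + r' powr (\<epsilon> * c / 2 - 1) * X^n / (1-r')"
    proof -
      have "(real K1 / c)^n \<le> X^n" using K1c c by (intro power_mono) auto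
      moreover have "(real K0 / c)^n \<le> X^n" using K0c c by (intro power_mono) auto
      moreover have "r'^(K1-K0) \<le> r' powr (\<epsilon> * c / 2 - 1)"
      proof -
        have "r'^(K1-K0) = r' powr real (K1-K0)" using r' by (simp add: powr_realpow)
        also have "\<dots> \<le> r' powr (\<epsilon> * c / 2 - 1)"
          using r' K01 rK0 rK1 by (intro powr_mono') (auto simp: of_nat_diff field_simps)
        finally show ?thesis .
      qed
      moreover have "X^n \<ge> 0" using X0 by simp
      moreover have "r'^(K1-K0) \<ge> 0" using r' by simp
      moreover have "(real K0 / c)^n \<ge> 0" using c by simp
      ultimately have "r'^(K1-K0) * (real K0 / c)^n \<le> r' powr (\<epsilon> * c / 2 - 1) * X^n"
        by (intro mult_mono) auto
      then have "r'^(K1-K0) * (real K0 / c)^n / (1-r') \<le> r' powr (\<epsilon> * c / 2 - 1) * X^n / (1-r')"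
        using r' by (intro divide_right_mono) auto
      with \<open>(real K1 / c)^n \<le> X^n\<close> show ?thesis by linarith
    qed
    also have "\<dots> = X^n * (1 + r' powr (\<epsilon> * c / 2 - 1) / (1 - r'))"
      by (simp add: field_simps)
    finally show ?case unfolding c_def X_def .
  qed
  then show ?thesis using r' by blast
qed


lemma lower_ev:
  assumes e: "0 < \<epsilon>" "\<epsilon> < 1"
  shows "\<exists>\<rho>. 0 < \<rho> \<and> \<rho> < 1 \<and> eventually (\<lambda>\<phi>. S g \<phi> n / (cpow \<alpha> \<phi> ^ n * S g \<phi> 0)
           \<ge> (1 - \<epsilon>)^n * (1 - (cpow \<alpha> \<phi> + 1) * \<rho> powr (\<epsilon> * cpow \<alpha> \<phi> / 2 - 2))) at_top"
proof -
  define q where "q = (1 - \<epsilon>/2) powr \<alpha>"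
  have q0: "q > 0" unfolding q_def using e by simp
  have q1: "q < 1" unfolding q_def using e a0 by (subst powr01_less_one) auto
  define t where "t = (1+q)/(2*q)"
  have t1: "t > 1" using q1 q0 unfolding t_def by (simp add: field_simps)
  have "eventually (\<lambda>k. g k / real k powr \<alpha> < t) sequentially"
    using order_tendstoD(2)[OF lim t1] by simp
  then obtain N2 where N2: "\<And>k. k \<ge> N2 \<Longrightarrow> g k / real k powr \<alpha> < t"
    by (auto simp: eventually_at_top_linorder)
  define \<rho> where "\<rho> = (1+q)/2"
  have rho: "0 < \<rho>" "\<rho> < 1" using q0 q1 unfolding \<rho>_def by auto
  have E2: "eventually (\<lambda>\<phi>. cpow \<alpha> \<phi> \<ge> (real N2 + 2)/(1-\<epsilon>/2) + 4/\<epsilon>) at_top"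
    by (rule ev_cpow[OF a0]) (rule eventually_ge_at_top)
  have E1: "eventually (\<lambda>\<phi>::real. \<phi> > 0) at_top" by (rule eventually_gt_at_top)
  have "eventually (\<lambda>\<phi>. S g \<phi> n / (cpow \<alpha> \<phi> ^ n * S g \<phi> 0)
           \<ge> (1 - \<epsilon>)^n * (1 - (cpow \<alpha> \<phi> + 1) * \<rho> powr (\<epsilon> * cpow \<alpha> \<phi> / 2 - 2))) at_top"
    using E1 E2
  proof eventually_elim
    case (elim \<phi>)
    define c where "c = cpow \<alpha> \<phi>"
    have phi: "\<phi> > 0" using elim by simp
    have c0: "c > 0" using cpow_pos[OF phi] unfolding c_def by simp
    have cb: "c \<ge> (real N2 + 2)/(1-\<epsilon>/2) + 4/\<epsilon>" using elim unfolding c_def by simp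
    have cpa: "c powr \<alpha> = \<phi>" unfolding c_def by (rule cpow_powr[OF phi a0])
    have e2: "1 - \<epsilon>/2 > 0" using e by simp
    have "4/\<epsilon> \<ge> 0" using e by simp
    then have "c \<ge> (real N2 + 2)/(1-\<epsilon>/2)" using cb by linarith
    then have cN: "(1-\<epsilon>/2)*c \<ge> real N2 + 2" using e2 by (simp add: field_simps)
    have "(real N2 + 2)/(1-\<epsilon>/2) \<ge> 0" using e2 by simp
    then have "c \<ge> 4/\<epsilon>" using cb by linarith
    then have ec: "\<epsilon> * c \<ge> 4" using e by (simp add: field_simps)
    define M3 where "M3 = nat \<lfloor>(1-\<epsilon>/2)*c\<rfloor>"
    define M where "M = nat \<lceil>(1-\<epsilon>)*c\<rceil>"
    have x0: "(1-\<epsilon>/2)*c \<ge> 0" "(1-\<epsilon>)*c \<ge> 0" using c0 e by simp_all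
    have fl0: "\<lfloor>(1-\<epsilon>/2)*c\<rfloor> \<ge> 0" using x0 by simp
    have eM3: "real M3 = real_of_int \<lfloor>(1-\<epsilon>/2)*c\<rfloor>"
      unfolding M3_def using fl0 by (simp add: of_nat_nat)
    have eM: "real M = real_of_int \<lceil>(1-\<epsilon>)*c\<rceil>"
      unfolding M_def using x0 by (simp add: of_nat_nat)
    have rM3: "(1-\<epsilon>/2)*c - 1 < real M3" "real M3 \<le> (1-\<epsilon>/2)*c"
      unfolding eM3 by (rule real_of_int_floor_gt_diff_one, rule of_int_floor_le)
    have rM: "(1-\<epsilon>)*c \<le> real M" "real M \<le> (1-\<epsilon>)*c + 1"
      unfolding eM by (rule le_of_int_ceiling, rule of_int_ceiling_le_add_one)
    have "(1-\<epsilon>)*c + 1 \<le> (1-\<epsilon>/2)*c - 1" using ec by (simp add: algebra_simps)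
    then have "real M \<le> real M3" using rM rM3 by linarith
    then have MM3: "M \<le> M3" by simp
    have "real M3 \<ge> real N2 + 1" using rM3 cN by linarith
    then have M3N: "M3 \<ge> N2" and M3pos: "M3 > 0" by linarith+
    have gM3: "g M3 < t * real M3 powr \<alpha>"
      using N2[OF M3N] M3pos by (simp add: field_simps)
    have "real M3 powr \<alpha> \<le> ((1-\<epsilon>/2)*c) powr \<alpha>"
      using rM3 a0 by (intro powr_mono2) auto
    also have "((1-\<epsilon>/2)*c) powr \<alpha> = q * \<phi>"
      unfolding q_def powr_mult cpa ..
    finally have Mq: "real M3 powr \<alpha> \<le> q * \<phi>" .
    have tpos: "t > 0" using t1 by simp
    have "t * real M3 powr \<alpha> \<le> t * (q * \<phi>)" using Mq tpos by (intro mult_left_mono) auto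
    moreover have "t * (q * \<phi>) = \<rho> * \<phi>" unfolding t_def \<rho>_def using q0 by (simp add: field_simps)
    ultimately have gM3': "g M3 \<le> \<rho> * \<phi>" using gM3 by linarith
    have st: "\<forall>k<M3. aa g \<phi> k \<le> \<rho> * aa g \<phi> (Suc k)"
    proof (intro allI impI)
      fix k assume k: "k < M3"
      have gpos: "g (Suc k) > 0" using adm_pos[OF adm] by simp
      have gS: "g (Suc k) \<le> g M3" using adm_mono[OF adm, of "Suc k" M3] k by simp
      have eq: "aa g \<phi> k * \<phi> = aa g \<phi> (Suc k) * g (Suc k)"
        using aa_Suc[OF adm, of \<phi> k] gpos by (simp add: field_simps)
      have an: "aa g \<phi> (Suc k) \<ge> 0" using aa_nonneg[OF adm] phi by simp
      have "aa g \<phi> (Suc k) * g (Suc k) \<le> aa g \<phi> (Suc k) * (\<rho> * \<phi>)"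
        using gS gM3' an by (intro mult_left_mono) auto
      then have "aa g \<phi> k * \<phi> \<le> (\<rho> * aa g \<phi> (Suc k)) * \<phi>" using eq by (simp add: ac_simps)
      then show "aa g \<phi> k \<le> \<rho> * aa g \<phi> (Suc k)" using phi by simp
    qed
    have kM: "\<forall>k\<ge>M. (1-\<epsilon>)*c \<le> real k"
    proof (intro allI impI)
      fix k assume "M \<le> k"
      then have "real M \<le> real k" by simp
      then show "(1-\<epsilon>)*c \<le> real k" using rM by linarith
    qed
    have L: "S g \<phi> n \<ge> ((1-\<epsilon>)*c)^n * (S g \<phi> 0 - real M * \<rho>^(M3-M) * S g \<phi> 0)"
      by (rule lower_fixed[OF adm gt phi MM3 _ _ x0(2) st kM]) (use rho in auto)
    have S0p: "S g \<phi> 0 > 0" using S0_ge1[OF adm gt phi] by simp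
    have cn: "c^n > 0" using c0 by simp
    have "(1 - \<epsilon>)^n * (1 - real M * \<rho>^(M3-M))
        = ((1-\<epsilon>)*c)^n * (S g \<phi> 0 - real M * \<rho>^(M3-M) * S g \<phi> 0) / (c^n * S g \<phi> 0)"
      using alg2[OF cn S0p] by simp
    also have "\<dots> \<le> S g \<phi> n / (c^n * S g \<phi> 0)"
      using L cn S0p by (intro divide_right_mono) auto
    finally have R: "(1 - \<epsilon>)^n * (1 - real M * \<rho>^(M3-M)) \<le> S g \<phi> n / (c^n * S g \<phi> 0)" .
    have Mc: "real M \<le> c + 1" using rM(2) e c0 by (smt (verit) mult_le_cancel_right1)
    have "\<rho>^(M3-M) = \<rho> powr real (M3-M)" using rho by (simp add: powr_realpow)
    also have "\<dots> \<le> \<rho> powr (\<epsilon> * c / 2 - 2)"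
      using rho MM3 rM3 rM by (intro powr_mono') (auto simp: of_nat_diff field_simps)
    finally have rp: "\<rho>^(M3-M) \<le> \<rho> powr (\<epsilon> * c / 2 - 2)" .
    have "real M * \<rho>^(M3-M) \<le> (c + 1) * \<rho> powr (\<epsilon> * c / 2 - 2)"
      using Mc rp rho c0 by (intro mult_mono) auto
    then have "(1 - \<epsilon>)^n * (1 - (c + 1) * \<rho> powr (\<epsilon> * c / 2 - 2)) \<le> (1 - \<epsilon>)^n * (1 - real M * \<rho>^(M3-M))"
      using e by (intro mult_left_mono) auto
    with R show ?case unfolding c_def by linarith
  qed
  then show ?thesis using rho by blast
qed


lemma ratio_lim: "((\<lambda>\<phi>. S g \<phi> n / (cpow \<alpha> \<phi> ^ n * S g \<phi> 0)) \<longlongrightarrow> 1) at_top"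
proof (rule order_tendstoI)
  fix a :: real assume a: "a < 1"
  have "((\<lambda>\<epsilon>::real. (1-\<epsilon>)^n - \<epsilon>) \<longlongrightarrow> (1-0)^n - 0) (at_right 0)"
    by (intro tendsto_intros)
  then have "eventually (\<lambda>\<epsilon>. a < (1-\<epsilon>)^n - \<epsilon>) (at_right 0)"
    using a by (intro order_tendstoD(1)) auto
  moreover have "eventually (\<lambda>\<epsilon>::real. 0 < \<epsilon> \<and> \<epsilon> < 1) (at_right 0)"
    by (simp add: eventually_at_right_field) (rule exI[of _ 1], auto)
  ultimately have "eventually (\<lambda>\<epsilon>. a < (1-\<epsilon>)^n - \<epsilon> \<and> 0 < \<epsilon> \<and> \<epsilon> < 1) (at_right (0::real))"
    by eventually_elim auto
  then obtain \<epsilon> where e: "a < (1-\<epsilon>)^n - \<epsilon>" "0 < \<epsilon>" "\<epsilon> < 1"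
    using eventually_happens'[OF trivial_limit_at_right_real] by blast
  obtain \<rho> where rho: "0 < \<rho>" "\<rho> < 1" and ev: "eventually (\<lambda>\<phi>. S g \<phi> n / (cpow \<alpha> \<phi> ^ n * S g \<phi> 0)
           \<ge> (1 - \<epsilon>)^n * (1 - (cpow \<alpha> \<phi> + 1) * \<rho> powr (\<epsilon> * cpow \<alpha> \<phi> / 2 - 2))) at_top"
    using lower_ev[OF e(2,3), of n] by blast
  have "((\<lambda>x. (x+1) * \<rho> powr (\<epsilon> * x / 2 - 2)) \<longlongrightarrow> 0) at_top"
    by (rule lim_rho2[OF rho e(2)])
  then have "((\<lambda>x. (1 - \<epsilon>)^n * (1 - (x+1) * \<rho> powr (\<epsilon> * x / 2 - 2))) \<longlongrightarrow> (1 - \<epsilon>)^n * (1 - 0)) at_top"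
    by (intro tendsto_intros)
  then have "((\<lambda>\<phi>. (1 - \<epsilon>)^n * (1 - (cpow \<alpha> \<phi>+1) * \<rho> powr (\<epsilon> * cpow \<alpha> \<phi> / 2 - 2))) \<longlongrightarrow> (1 - \<epsilon>)^n) at_top"
    using filterlim_compose[OF _ cpow_at_top[OF a0]] by simp
  then have "eventually (\<lambda>\<phi>. (1 - \<epsilon>)^n - \<epsilon> < (1 - \<epsilon>)^n * (1 - (cpow \<alpha> \<phi>+1) * \<rho> powr (\<epsilon> * cpow \<alpha> \<phi> / 2 - 2))) at_top"
    using e by (intro order_tendstoD(1)) auto
  with ev show "eventually (\<lambda>\<phi>. a < S g \<phi> n / (cpow \<alpha> \<phi> ^ n * S g \<phi> 0)) at_top"
    by eventually_elim (use e in linarith)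
next
  fix a :: real assume a: "a > 1"
  have "((\<lambda>\<epsilon>::real. (1+\<epsilon>)^n + \<epsilon>) \<longlongrightarrow> (1+0)^n + 0) (at_right 0)"
    by (intro tendsto_intros)
  then have "eventually (\<lambda>\<epsilon>. (1+\<epsilon>)^n + \<epsilon> < a) (at_right 0)"
    using a by (intro order_tendstoD(2)) auto
  moreover have "eventually (\<lambda>\<epsilon>::real. 0 < \<epsilon> \<and> \<epsilon> < 1) (at_right 0)"
    by (simp add: eventually_at_right_field) (rule exI[of _ 1], auto)
  ultimately have "eventually (\<lambda>\<epsilon>. (1+\<epsilon>)^n + \<epsilon> < a \<and> 0 < \<epsilon> \<and> \<epsilon> < 1) (at_right (0::real))"
    by eventually_elim auto
  then obtain \<epsilon> where e: "(1+\<epsilon>)^n + \<epsilon> < a" "0 < \<epsilon>" "\<epsilon> < 1"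
    using eventually_happens'[OF trivial_limit_at_right_real] by blast
  obtain r' where r': "0 < r'" "r' < 1" and ev: "eventually (\<lambda>\<phi>. S g \<phi> n / (cpow \<alpha> \<phi> ^ n * S g \<phi> 0)
           \<le> (1 + \<epsilon> + 1 / cpow \<alpha> \<phi>)^n * (1 + r' powr (\<epsilon> * cpow \<alpha> \<phi> / 2 - 1) / (1 - r'))) at_top"
    using upper_ev[OF e(2,3), of n] by blast
  have l1: "((\<lambda>x. r' powr (\<epsilon> * x / 2 - 1)) \<longlongrightarrow> 0) at_top"
    by (rule lim_rho1[OF r' e(2)])
  have l2: "((\<lambda>x::real. 1 + \<epsilon> + 1 / x) \<longlongrightarrow> 1 + \<epsilon>) at_top" by real_asymp
  have "((\<lambda>x. (1 + \<epsilon> + 1 / x)^n * (1 + r' powr (\<epsilon> * x / 2 - 1) / (1 - r'))) \<longlongrightarrow> (1 + \<epsilon>)^n * (1 + 0 / (1 - r'))) at_top"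
    by (intro tendsto_intros l1 l2) (use r' in simp)
  then have "((\<lambda>\<phi>. (1 + \<epsilon> + 1 / cpow \<alpha> \<phi>)^n * (1 + r' powr (\<epsilon> * cpow \<alpha> \<phi> / 2 - 1) / (1 - r'))) \<longlongrightarrow> (1 + \<epsilon>)^n) at_top"
    using filterlim_compose[OF _ cpow_at_top[OF a0]] by simp
  then have "eventually (\<lambda>\<phi>. (1 + \<epsilon> + 1 / cpow \<alpha> \<phi>)^n * (1 + r' powr (\<epsilon> * cpow \<alpha> \<phi> / 2 - 1) / (1 - r')) < (1 + \<epsilon>)^n + \<epsilon>) at_top"
    using e by (intro order_tendstoD(2)) auto
  with ev show "eventually (\<lambda>\<phi>. S g \<phi> n / (cpow \<alpha> \<phi> ^ n * S g \<phi> 0) < a) at_top"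
    by eventually_elim (use e in linarith)
qed


lemma cpow_pow: "\<phi> > 0 \<Longrightarrow> cpow \<alpha> \<phi> ^ n = \<phi> powr (real n / \<alpha>)"
proof -
  assume p: "\<phi> > 0"
  have "cpow \<alpha> \<phi> ^ n = cpow \<alpha> \<phi> powr real n" using cpow_pos[OF p] by (simp add: powr_realpow)
  also have "\<dots> = \<phi> powr (real n / \<alpha>)" unfolding cpow_def by (simp add: powr_powr)
  finally show ?thesis .
qed

lemma moment_lim: "((\<lambda>\<phi>. moment g \<phi> n / \<phi> powr (real n / \<alpha>)) \<longlongrightarrow> 1) at_top"
proof (rule Lim_transform_eventually[OF ratio_lim[of n]])
  show "eventually (\<lambda>\<phi>. S g \<phi> n / (cpow \<alpha> \<phi> ^ n * S g \<phi> 0) = moment g \<phi> n / \<phi> powr (real n / \<alpha>)) at_top"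
    using eventually_gt_at_top[of 0]
  proof eventually_elim
    case (elim \<phi>)
    then show ?case unfolding moment_eq[OF adm gt elim] cpow_pow[OF elim, symmetric] by simp
  qed
qed

lemma Z_deriv:
  assumes p: "\<phi> > 0"
  shows "(Zg g has_real_derivative S g \<phi> 1 / \<phi>) (at \<phi>)"
proof -
  define cf where "cf = (\<lambda>n. 1 / gfact g n)"
  have Zf: "Zg g = (\<lambda>x. \<Sum>n. cf n * x^n)" by (rule ext) (simp add: Zg_def cf_def)
  have sm: "summable (\<lambda>n. cf n * y^n)" for y :: real
  proof (cases "y = 0")
    case True
    then show ?thesis using summable_0_powser[of cf] by simp
  next
    case False
    then have "summable (aa g \<bar>y\<bar>)" by (intro summable_aa[OF adm gt]) simp
    moreover have "norm (cf n * y^n) = aa g \<bar>y\<bar> n" for n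
      unfolding cf_def aa_def using gfact_pos[OF adm, of n] by (simp add: abs_mult power_abs)
    ultimately have "summable (\<lambda>n. norm (cf n * y^n))" by presburger
    then show ?thesis by (rule summable_norm_cancel)
  qed
  have D: "(Zg g has_real_derivative (\<Sum>n. diffs cf n * \<phi>^n)) (at \<phi>)"
    unfolding Zf by (rule termdiffs_strong_converges_everywhere[OF sm])
  have sb: "summable (\<lambda>k. real k ^ 1 * aa g \<phi> k)" by (rule summable_b[OF adm gt p])
  have pt: "diffs cf n * \<phi>^n = (real (Suc n) ^ 1 * aa g \<phi> (Suc n)) / \<phi>" for n
  proof -
    have e1: "diffs cf n * \<phi>^n = real (Suc n) * \<phi>^n / gfact g (Suc n)" unfolding diffs_def cf_def by simp
    have e2: "real (Suc n) ^ 1 * aa g \<phi> (Suc n) / \<phi> = real (Suc n) * \<phi>^n / gfact g (Suc n)"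
      unfolding aa_def using p by simp
    show ?thesis by (simp only: e1 e2)
  qed
  have sS: "summable (\<lambda>n. real (Suc n) ^ 1 * aa g \<phi> (Suc n))"
    using summable_Suc_iff[of "\<lambda>k. real k ^ 1 * aa g \<phi> k"] sb by simp
  have "(\<Sum>n. diffs cf n * \<phi>^n) = (\<Sum>n. (real (Suc n) ^ 1 * aa g \<phi> (Suc n)) / \<phi>)"
    unfolding pt ..
  also have "\<dots> = (\<Sum>n. real (Suc n) ^ 1 * aa g \<phi> (Suc n)) / \<phi>"
    by (rule suminf_divide[OF sS])
  also have "(\<Sum>n. real (Suc n) ^ 1 * aa g \<phi> (Suc n)) = S g \<phi> 1"
    unfolding S_def using suminf_split_head[OF sb] by simp
  finally show ?thesis using D by simp
qed

lemma lnZ_lim: "((\<lambda>\<phi>. ln (Zg g \<phi>) / (\<alpha> * \<phi> powr (1/\<alpha>))) \<longlongrightarrow> 1) at_top"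
proof (rule lhospital_at_top_at_top[where f' = "\<lambda>\<phi>. S g \<phi> 1 / \<phi> / Zg g \<phi>"
      and g' = "\<lambda>\<phi>. \<phi> powr (1/\<alpha> - 1)"])
  show "LIM x at_top. \<alpha> * x powr (1 / \<alpha>) :> at_top" using a0 by real_asymp
  show "eventually (\<lambda>x. x powr (1/\<alpha> - 1) \<noteq> 0) at_top"
    using eventually_gt_at_top[of 0] by eventually_elim simp
  show "eventually (\<lambda>x. ((\<lambda>\<phi>. ln (Zg g \<phi>)) has_real_derivative S g x 1 / x / Zg g x) (at x)) at_top"
    using eventually_gt_at_top[of 0]
  proof eventually_elim
    case (elim x)
    have Zp: "Zg g x > 0" unfolding Zg_eq using S0_ge1[OF adm gt elim] by simp
    have "((\<lambda>\<phi>. ln (Zg g \<phi>)) has_real_derivative 1 / Zg g x * (S g x 1 / x)) (at x)"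
      by (rule DERIV_chain2[OF DERIV_ln_divide[OF Zp] Z_deriv[OF elim]])
    then show ?case by (simp add: mult.commute)
  qed
  show "eventually (\<lambda>x. ((\<lambda>\<phi>. \<alpha> * \<phi> powr (1/\<alpha>)) has_real_derivative x powr (1/\<alpha> - 1)) (at x)) at_top"
    using eventually_gt_at_top[of 0]
  proof eventually_elim
    case (elim x)
    have "((\<lambda>\<phi>. \<alpha> * \<phi> powr (1/\<alpha>)) has_real_derivative \<alpha> * ((1/\<alpha>) * x powr (1/\<alpha> - 1))) (at x)"
      by (intro DERIV_cmult has_real_derivative_powr elim)
    then show ?case using a0 by simp
  qed
  show "((\<lambda>x. S g x 1 / x / Zg g x / x powr (1/\<alpha> - 1)) \<longlongrightarrow> 1) at_top"
  proof (rule Lim_transform_eventually[OF ratio_lim[of 1]])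
    show "eventually (\<lambda>x. S g x 1 / (cpow \<alpha> x ^ 1 * S g x 0) = S g x 1 / x / Zg g x / x powr (1/\<alpha> - 1)) at_top"
      using eventually_gt_at_top[of 0]
    proof eventually_elim
      case (elim x)
      have "x * x powr (1/\<alpha> - 1) = x powr 1 * x powr (1/\<alpha> - 1)" using elim by simp
      also have "\<dots> = x powr (1 + (1/\<alpha> - 1))" by (rule powr_add[symmetric])
      also have "\<dots> = cpow \<alpha> x" unfolding cpow_def by simp
      finally have c: "x * x powr (1/\<alpha> - 1) = cpow \<alpha> x" .
      show ?case unfolding c[symmetric] Zg_eq power_one_right
        by (simp add: divide_divide_eq_left mult_ac)
    qed
  qed
qed

lemma var_lim: "((\<lambda>\<phi>. variance_g g \<phi> / \<phi> powr (2/\<alpha>)) \<longlongrightarrow> 0) at_top"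
proof -
  have "((\<lambda>\<phi>. moment g \<phi> 2 / \<phi> powr (real 2 / \<alpha>) - (moment g \<phi> 1 / \<phi> powr (real 1 / \<alpha>))^2) \<longlongrightarrow> 1 - 1^2) at_top"
    by (intro tendsto_intros moment_lim)
  moreover have "eventually (\<lambda>\<phi>. moment g \<phi> 2 / \<phi> powr (real 2 / \<alpha>) - (moment g \<phi> 1 / \<phi> powr (real 1 / \<alpha>))^2
      = variance_g g \<phi> / \<phi> powr (2/\<alpha>)) at_top"
    using eventually_gt_at_top[of 0]
  proof eventually_elim
    case (elim x)
    have "x powr (2/\<alpha>) = (x powr (1/\<alpha>))^2"
      using elim by (simp add: powr_powr powr_realpow[symmetric])
    then show ?case unfolding variance_g_def by (simp add: power_divide diff_divide_distrib power2_eq_square)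
  qed
  ultimately show ?thesis by (simp add: tendsto_cong)
qed

end


theorem mainTheorem8:
  fixes g :: "nat \<Rightarrow> real" and \<alpha> :: real
  assumes "admissible_g g"
    and "0 < \<alpha>" and "\<alpha> \<le> 1"
    and "((\<lambda>k. g k / real k powr \<alpha>) \<longlongrightarrow> 1) at_top"
  shows "(\<forall>n::nat. n \<ge> 1 \<longrightarrow>
            (\<lambda>\<phi>. moment g \<phi> n) \<sim>[at_top] (\<lambda>\<phi>. \<phi> powr (real n / \<alpha>)))
         \<and> (\<lambda>\<phi>. ln (Zg g \<phi>)) \<sim>[at_top] (\<lambda>\<phi>. \<alpha> * \<phi> powr (1 / \<alpha>))
         \<and> (\<lambda>\<phi>. variance_g g \<phi>) \<in> o[at_top](\<lambda>\<phi>. \<phi> powr (2 / \<alpha>))"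
proof (intro conjI allI impI)
  fix n :: nat
  show "(\<lambda>\<phi>. moment g \<phi> n) \<sim>[at_top] (\<lambda>\<phi>. \<phi> powr (real n / \<alpha>))"
    by (rule asymp_equivI'[OF moment_lim[OF assms]])
next
  show "(\<lambda>\<phi>. ln (Zg g \<phi>)) \<sim>[at_top] (\<lambda>\<phi>. \<alpha> * \<phi> powr (1 / \<alpha>))"
    by (rule asymp_equivI'[OF lnZ_lim[OF assms]])
next
  have "eventually (\<lambda>\<phi>::real. \<phi> powr (2 / \<alpha>) \<noteq> 0) at_top"
    using eventually_gt_at_top[of 0] by eventually_elim simp
  then show "(\<lambda>\<phi>. variance_g g \<phi>) \<in> o[at_top](\<lambda>\<phi>. \<phi> powr (2 / \<alpha>))"
    by (rule smalloI_tendsto[OF var_lim[OF assms]])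
qed

end
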